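(* Let $N$ be a finite set, $C \subseteq 2^{N}$ a family of subsets of $N$, and let $(x^*,y^* )$ be a vertex of the polytope $\bar{P}(C) = \{ (x,y) \in [0,1]^{|N|+1} : \sum_{j \in S} x_j \ge y \ \forall S \in C\}$. Then $y^* \in \{0,1\}$.
   Context: Here $x = (x_j)_{j\in N}$ and $y$ is a scalar variable. *)

theory Defs
  imports "HOL-Analysis.Analysis"
begin

text \<open>The ground set N is the finite index type 'n; points of R^{|N|+1} are pairs (x,y)
  with x :: real^'n and y :: real.\<close>

definition Pbar :: "'n::finite set set \<Rightarrow> ((real^'n) \<times> real) set" where
  "Pbar C = {(x, y). (\<forall>j. 0 \<le> x $ j \<and> x $ j \<le> 1) \<and> 0 \<le> y \<and> y \<le> 1 \<and>
                     (\<forall>S\<in>C. (\<Sum>j\<in>S. x $ j) \<ge> y)}"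

end

theory Submission
  imports Defs
begin

theorem lemma2:
  fixes C :: "'n::finite set set" and xs :: "real^'n" and ys :: real
  assumes "(xs, ys) extreme_point_of Pbar C"
  shows "ys \<in> {0, 1}"
proof (rule ccontr)
  assume nz: "ys \<notin> {0, 1}"
  have mem: "(xs, ys) \<in> Pbar C" and ext: "\<forall>a\<in>Pbar C. \<forall>b\<in>Pbar C. (xs, ys) \<notin> open_segment a b"
    using assms by (auto simp: extreme_point_of_def)
  have box: "\<And>j. 0 \<le> xs $ j \<and> xs $ j \<le> 1" and y0: "0 \<le> ys" and y1: "ys \<le> 1"
    and cons: "\<And>S. S \<in> C \<Longrightarrow> (\<Sum>j\<in>S. xs $ j) \<ge> ys"
    using mem by (auto simp: Pbar_def)
  have yp: "0 < ys" and yl: "ys < 1" using nz y0 y1 by auto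
  define x0 where "x0 = (\<chi> j. max (xs $ j - ys) 0 / (1 - ys))"
  define x1 where "x1 = (\<chi> j. min 1 (xs $ j / ys))"
  have a: "(x0, 0) \<in> Pbar C"
  proof -
    have "\<And>j. 0 \<le> x0 $ j \<and> x0 $ j \<le> 1"
    proof -
      fix j
      have "max (xs $ j - ys) 0 \<le> 1 - ys" using box[of j] yl by auto
      then show "0 \<le> x0 $ j \<and> x0 $ j \<le> 1" using yl by (simp add: x0_def field_simps)
    qed
    moreover have "\<And>S. (\<Sum>j\<in>S. x0 $ j) \<ge> 0"
      using calculation by (simp add: sum_nonneg)
    ultimately show ?thesis by (simp add: Pbar_def)
  qed
  have b: "(x1, 1) \<in> Pbar C"
  proof -
    have bx: "\<And>j. 0 \<le> x1 $ j \<and> x1 $ j \<le> 1"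
      using box yp by (simp add: x1_def)
    moreover have "\<And>S. S \<in> C \<Longrightarrow> (\<Sum>j\<in>S. x1 $ j) \<ge> 1"
    proof -
      fix S assume S: "S \<in> C"
      show "(\<Sum>j\<in>S. x1 $ j) \<ge> 1"
      proof (cases "\<exists>j\<in>S. xs $ j \<ge> ys")
        case True
        then obtain j where j: "j \<in> S" "xs $ j \<ge> ys" by auto
        have "x1 $ j = 1" using j yp by (simp add: x1_def)
        moreover have "x1 $ j \<le> (\<Sum>j\<in>S. x1 $ j)"
          using j bx by (intro member_le_sum) auto
        ultimately show ?thesis by simp
      next
        case False
        then have "\<And>j. j \<in> S \<Longrightarrow> x1 $ j = xs $ j / ys"
          using yp box by (auto simp: x1_def)
        then have "(\<Sum>j\<in>S. x1 $ j) = (\<Sum>j\<in>S. xs $ j) / ys"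
          by (simp add: sum_divide_distrib)
        then show ?thesis using cons[OF S] yp by simp
      qed
    qed
    ultimately show ?thesis by (simp add: Pbar_def)
  qed
  have eq: "(xs, ys) = (1 - ys) *\<^sub>R (x0, 0) + ys *\<^sub>R (x1, 1)"
  proof -
    have "xs = (1 - ys) *\<^sub>R x0 + ys *\<^sub>R x1"
    unfolding vec_eq_iff proof
      fix j
      have "(1 - ys) * (max (xs $ j - ys) 0 / (1 - ys)) = max (xs $ j - ys) 0"
        using yl by simp
      moreover have "ys * min 1 (xs $ j / ys) = min ys (xs $ j)"
        using yp by (simp add: min_def field_simps)
      ultimately show "xs $ j = ((1 - ys) *\<^sub>R x0 + ys *\<^sub>R x1) $ j"
        by (auto simp: x0_def x1_def max_def min_def)
    qed
    then show ?thesis by simp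
  qed
  have "(xs, ys) \<in> open_segment (x0, 0) (x1, 1)"
    unfolding in_segment using yp yl eq by auto
  then show False using ext a b by blast
qed

end
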